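(* Let $q$ be a prime power and let $n$ be an odd positive integer coprime to $q$. Then $x-1$ is the only SCRIM factor of $x^{n}-1$ in $\mathbb{F}_{q^2}[x]$ if and only if for every prime divisor $l$ of $n$, $\mathrm{ord}_l(q^2)$ is even or $\mathrm{ord}_l(q)$ is odd.
   Context: $\mathbb{F}_{q^2}$ is the finite field with $q^2$ elements. For $\alpha\in\mathbb{F}_{q^2}$ put $\bar\alpha=\alpha^q$, and for $f(x)=\sum_i f_ix^i$ put $\overline{f(x)}=\sum_i \bar f_i x^i$. For $f(x)$ with $f(0)\neq 0$, $f^*(x)=x^{\deg f}f(0)^{-1}f(1/x)$ and $f^\dagger(x)=\overline{f^*(x)}$. A polynomial is SCRIM if it is monic, irreducible over $\mathbb{F}_{q^2}$, has nonzero constant term, and satisfies $f=f^\dagger$. A SCRIM factor of $x^n-1$ is a SCRIM polynomial dividing $x^n-1$ in $\mathbb{F}_{q^2}[x]$. $\mathrm{ord}_l(a)$ denotes the multiplicative order of $a$ modulo $l$. *)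

theory Defs
  imports "HOL-Computational_Algebra.Computational_Algebra" "HOL-Number_Theory.Pocklington"
begin

text \<open>Conjugation on F_{q^2}: a bar = a^q, extended coefficientwise to polynomials.\<close>
definition conj_poly :: "nat \<Rightarrow> 'a::field poly \<Rightarrow> 'a poly" where
  "conj_poly q f = map_poly (\<lambda>a. a ^ q) f"

definition recip_poly :: "'a::field poly \<Rightarrow> 'a poly" where
  "recip_poly f = Polynomial.smult (inverse (Polynomial.coeff f 0)) (reflect_poly f)"

definition dagger_poly :: "nat \<Rightarrow> 'a::field poly \<Rightarrow> 'a poly" where
  "dagger_poly q f = conj_poly q (recip_poly f)"

definition SCRIM :: "nat \<Rightarrow> 'a::field poly \<Rightarrow> bool" where
  "SCRIM q f \<longleftrightarrow> lead_coeff f = 1 \<and> irreducible f \<and> Polynomial.coeff f 0 \<noteq> 0 \<and> f = dagger_poly q f"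

end

theory Submission
  imports Defs "HOL-Algebra.Algebraic_Closure_Type" "HOL-Number_Theory.Residues"
begin

hide_const (open) Divisibility.prime Divisibility.irreducible module.smult Polynomials.lead_coeff up_ring.coeff up_ring.monom Polynomials.degree

lemma map_poly_hom_add:
  assumes "h 0 = 0" "\<And>x y. h (x + y) = h x + h y"
  shows "map_poly h (a + b) = map_poly h a + map_poly h b"
  by (intro poly_eqI) (simp add: coeff_map_poly assms)

lemma map_poly_hom_mult:
  fixes h :: "'a::comm_ring_1 \<Rightarrow> 'b::comm_ring_1"
  assumes "h 0 = 0" "\<And>x y. h (x + y) = h x + h y" "\<And>x y. h (x * y) = h x * h y"
  shows "map_poly h (a * b) = map_poly h a * map_poly h b"
proof (induction a)
  case 0 then show ?case by simp
next
  case (pCons c a)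
  have "map_poly h (pCons c a * b) = map_poly h (smult c b + pCons 0 (a * b))"
    by simp
  also have "\<dots> = smult (h c) (map_poly h b) + pCons 0 (map_poly h a * map_poly h b)"
    by (simp add: map_poly_hom_add[OF assms(1,2)] map_poly_smult assms map_poly_pCons pCons.IH)
  also have "\<dots> = map_poly h (pCons c a) * map_poly h b"
    by (simp add: map_poly_pCons assms)
  finally show ?case .
qed

lemma map_poly_hom_prod:
  fixes h :: "'a::comm_ring_1 \<Rightarrow> 'b::comm_ring_1"
  assumes "h 0 = 0" "h 1 = 1" "\<And>x y. h (x + y) = h x + h y" "\<And>x y. h (x * y) = h x * h y"
  shows "map_poly h (\<Prod>i\<in>A. g i) = (\<Prod>i\<in>A. map_poly h (g i))"
  by (induction A rule: infinite_finite_induct)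
     (auto simp: map_poly_hom_mult[OF assms(1,3,4)] assms(2))

lemma map_poly_hom_prod_mset:
  fixes h :: "'a::comm_ring_1 \<Rightarrow> 'b::comm_ring_1"
  assumes "h 0 = 0" "h 1 = 1" "\<And>x y. h (x + y) = h x + h y" "\<And>x y. h (x * y) = h x * h y"
  shows "map_poly h (prod_mset M) = prod_mset (image_mset (map_poly h) M)"
  by (induction M) (auto simp: map_poly_hom_mult[OF assms(1,3,4)] assms(2))

lemma frob_add:
  fixes x y :: "'a::comm_ring_1"
  assumes "prime CHAR('a)" "N = CHAR('a) ^ m"
  shows "(x + y) ^ N = x ^ N + y ^ N"
  using freshmans_dream'[OF assms] .

lemma frob_neg:
  fixes x :: "'a::comm_ring_1"
  assumes "prime CHAR('a)" "N = CHAR('a) ^ m"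
  shows "(- x) ^ N = - (x ^ N)"
proof -
  have "N > 0" using assms prime_gt_0_nat by auto
  have "(-x + x) ^ N = (-x) ^ N + x ^ N" by (rule frob_add[OF assms])
  then have "(-x) ^ N + x ^ N = 0" using \<open>N > 0\<close> by (simp add: power_0_left)
  then show ?thesis by (simp add: eq_neg_iff_add_eq_0)
qed

lemma frob_inj:
  fixes x y :: "'a::idom"
  assumes "prime CHAR('a)" "N = CHAR('a) ^ m" "x ^ N = y ^ N"
  shows "x = y"
proof -
  have "(x + (-y)) ^ N = x ^ N + (- y) ^ N" by (rule frob_add[OF assms(1,2)])
  also have "\<dots> = 0" using frob_neg[OF assms(1,2)] assms(3) by simp
  finally show ?thesis by simp
qed


lemma finite_field_pow_card:
  fixes x :: "'a :: {finite,field}"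
  shows "x ^ card (UNIV :: 'a set) = x"
proof (cases "x = 0")
  case False
  have "x * (\<Prod>y\<in>UNIV-{0}. x * y) = x * x ^ (card (UNIV :: 'a set) - 1) * \<Prod>(UNIV-{0})"
    by (simp add: prod.distrib mult_ac)
  also have "x * x ^ (card (UNIV :: 'a set) - 1) = x ^ Suc (card (UNIV :: 'a set) - 1)"
    by (subst power_Suc) auto
  also have "Suc (card (UNIV :: 'a set) - 1) = card (UNIV :: 'a set)"
    using finite_UNIV_card_ge_0[where ?'a = 'a] by simp
  also have "(\<Prod>y\<in>UNIV-{0}. x * y) = (\<Prod>y\<in>UNIV-{0}. y)"
    by (rule prod.reindex_bij_witness[of _ "\<lambda>y. y / x" "\<lambda>y. x * y"]) (use False in auto)
  finally show ?thesis
    by simp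
qed (use finite_UNIV_card_ge_0[where ?'a = 'a] in auto)

lemma finite_field_pow_card_pow:
  fixes x :: "'a :: {finite,field}"
  shows "x ^ (card (UNIV :: 'a set) ^ i) = x"
  by (induction i) (simp_all add: finite_field_pow_card power_mult)

lemma prime_CHAR_ff: "prime CHAR('a :: {finite,field})"
  by (intro prime_CHAR_semidom finite_imp_CHAR_pos) simp

lemma map_poly_to_ac_mult:
  "map_poly to_ac (a * b) = map_poly to_ac a * map_poly (to_ac :: 'a::field \<Rightarrow> _) b"
  by (rule map_poly_hom_mult) auto

lemma map_poly_to_ac_add:
  "map_poly to_ac (a + b) = map_poly to_ac a + map_poly (to_ac :: 'a::field \<Rightarrow> _) b"
  by (rule map_poly_hom_add) auto

lemma frob_eval:
  fixes g :: "'a::field poly" and z :: "'a alg_closure"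
  assumes "prime CHAR('a)" "N = CHAR('a) ^ m"
  shows "poly (map_poly to_ac (map_poly (\<lambda>c. c ^ N) g)) (z ^ N) = (poly (map_poly to_ac g) z) ^ N"
proof -
  have N0: "N > 0" using assms prime_gt_0_nat by auto
  have P: "prime CHAR('a alg_closure)" "N = CHAR('a alg_closure) ^ m" using assms by simp_all
  show ?thesis
  proof (induction g)
    case 0 then show ?case using N0 by (simp add: power_0_left)
  next
    case (pCons c g)
    have "poly (map_poly to_ac (map_poly (\<lambda>c. c ^ N) (pCons c g))) (z ^ N)
        = to_ac c ^ N + z ^ N * poly (map_poly to_ac (map_poly (\<lambda>c. c ^ N) g)) (z ^ N)"
      using N0 by (simp add: map_poly_pCons power_0_left)
    also have "\<dots> = (to_ac c + z * poly (map_poly to_ac g) z) ^ N"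
      by (simp add: pCons.IH frob_add[OF P] power_mult_distrib)
    also have "\<dots> = (poly (map_poly to_ac (pCons c g)) z) ^ N"
      by (simp add: map_poly_pCons)
    finally show ?case .
  qed
qed

lemma fixed_in_range:
  fixes z :: "'a::{finite,field} alg_closure"
  assumes "z ^ card (UNIV::'a set) = z"
  shows "z \<in> range to_ac"
proof -
  define Q where "Q = card (UNIV::'a set)"
  have Q2: "Q \<ge> 2"
  proof -
    have "{0, 1::'a} \<subseteq> UNIV" by simp
    then have "card {0,1::'a} \<le> Q" unfolding Q_def by (intro card_mono) auto
    then show ?thesis by simp
  qed
  define R :: "'a alg_closure poly" where "R = monom 1 Q - monom 1 1"
  have cR: "coeff R Q = 1" using Q2 by (simp add: R_def)
  then have R0: "R \<noteq> 0" by auto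
  have dR: "degree R \<le> Q" unfolding R_def using Q2
    by (intro degree_diff_le) (auto simp: degree_monom_eq)
  have roots: "{x. poly R x = 0} = {x::'a alg_closure. x ^ Q = x}"
    by (auto simp: R_def poly_monom)
  have sub: "range (to_ac :: 'a \<Rightarrow> 'a alg_closure) \<subseteq> {x::'a alg_closure. x ^ Q = x}"
  proof
    fix y assume "y \<in> range (to_ac :: 'a \<Rightarrow> _)"
    then obtain c :: 'a where "y = to_ac c" by auto
    then show "y \<in> {x::'a alg_closure. x ^ Q = x}"
      using finite_field_pow_card[of c] unfolding Q_def by (simp flip: to_ac_power)
  qed
  have fin: "finite {x::'a alg_closure. x ^ Q = x}" using poly_roots_finite[OF R0] roots by simp
  have "card (range (to_ac :: 'a \<Rightarrow> _)) = Q"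
    unfolding Q_def by (simp add: card_image inj_to_ac)
  moreover have "card {x::'a alg_closure. x ^ Q = x} \<le> Q"
    using card_poly_roots_bound[OF R0] dR roots by simp
  ultimately have "range to_ac = {x::'a alg_closure. x ^ Q = x}"
    using card_subset_eq[OF fin sub] card_mono[OF fin sub] by simp
  then show ?thesis using assms Q_def by auto
qed



lemma minpoly_exists:
  fixes Y :: "'a::field poly" and \<alpha> :: "'a alg_closure"
  assumes "Y \<noteq> 0" "poly (map_poly to_ac Y) \<alpha> = 0"
  obtains m where "m \<noteq> 0" "poly (map_poly to_ac m) \<alpha> = 0"
    "\<And>g. poly (map_poly to_ac g) \<alpha> = 0 \<Longrightarrow> m dvd g" "irreducible m" "lead_coeff m = 1"
proof -
  define P where "P = (\<lambda>d. \<exists>g. g \<noteq> 0 \<and> degree g = d \<and> poly (map_poly to_ac g) \<alpha> = 0)"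
  have "P (degree Y)" using assms P_def by blast
  define d where "d = (LEAST d. P d)"
  have d: "P d" "\<And>d'. P d' \<Longrightarrow> d \<le> d'"
    unfolding d_def by (rule LeastI, fact) (rule Least_le)
  from d(1) obtain m0 where m0: "m0 \<noteq> 0" "degree m0 = d" "poly (map_poly to_ac m0) \<alpha> = 0"
    unfolding P_def by blast
  define m where "m = smult (inverse (lead_coeff m0)) m0"
  have m: "m \<noteq> 0" "degree m = d" "poly (map_poly to_ac m) \<alpha> = 0" "lead_coeff m = 1"
  proof -
    show "m \<noteq> 0" using m0(1) by (simp add: m_def)
    show "degree m = d" using m0(1) by (simp add: m_def m0(2)[symmetric])
    show "lead_coeff m = 1" using m0(1) by (simp add: m_def)
    have "map_poly to_ac m = smult (to_ac (inverse (lead_coeff m0))) (map_poly to_ac m0)"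
      unfolding m_def by (rule map_poly_smult) simp_all
    then show "poly (map_poly to_ac m) \<alpha> = 0" using m0(3) by simp
  qed
  have dvd: "m dvd g" if "poly (map_poly to_ac g) \<alpha> = 0" for g
  proof -
    have eq: "g = g div m * m + g mod m" by simp
    have E: "map_poly to_ac g = map_poly to_ac (g div m) * map_poly to_ac m + map_poly to_ac (g mod m)"
      by (subst eq) (simp only: map_poly_to_ac_add map_poly_to_ac_mult)
    have "poly (map_poly to_ac (g mod m)) \<alpha> = 0"
      using arg_cong[OF E, of "\<lambda>p. poly p \<alpha>"] that m(3) by simp
    have "g mod m = 0"
    proof (rule ccontr)
      assume "g mod m \<noteq> 0"
      then have "degree (g mod m) < degree m" using degree_mod_less' m(1) by blast
      moreover have "P (degree (g mod m))"
        using \<open>g mod m \<noteq> 0\<close> \<open>poly (map_poly to_ac (g mod m)) \<alpha> = 0\<close> P_def by blast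
      ultimately show False using d(2)[of "degree (g mod m)"] m(2) by linarith
    qed
    then show ?thesis by (simp add: mod_eq_0_iff_dvd)
  qed
  have nu: "\<not> is_unit m"
  proof
    assume "is_unit m"
    then have "degree m = 0" using is_unit_iff_degree m(1) by blast
    then obtain c where "m = [:c:]" by (metis degree_eq_zeroE)
    then show False using m(1,3) by (simp add: map_poly_pCons)
  qed
  have "irreducible m"
  proof (rule Factorial_Ring.irreducibleI)
    show "m \<noteq> 0" by fact
    show "\<not> is_unit m" by fact
    fix a b assume ab: "m = a * b"
    have a0: "a \<noteq> 0" and b0: "b \<noteq> 0" using m(1) ab by simp_all
    have "poly (map_poly to_ac a) \<alpha> = 0 \<or> poly (map_poly to_ac b) \<alpha> = 0"
      using m(3) unfolding ab map_poly_to_ac_mult by simp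
    then show "is_unit a \<or> is_unit b"
    proof
      assume "poly (map_poly to_ac a) \<alpha> = 0"
      then have "m dvd a" by (rule dvd)
      then have "degree m \<le> degree a" using a0 by (rule dvd_imp_degree_le)
      then have "degree b = 0" using ab a0 b0 degree_mult_eq[of a b] by simp
      then show ?thesis using is_unit_iff_degree b0 by blast
    next
      assume "poly (map_poly to_ac b) \<alpha> = 0"
      then have "m dvd b" by (rule dvd)
      then have "degree m \<le> degree b" using b0 by (rule dvd_imp_degree_le)
      then have "degree a = 0" using ab a0 b0 degree_mult_eq[of a b] by simp
      then show ?thesis using is_unit_iff_degree a0 by blast
    qed
  qed
  then show ?thesis using that m dvd by blast
qed

lemma root_dvd:
  fixes f g :: "'a::field poly"
  assumes "irreducible f" "poly (map_poly to_ac f) \<alpha> = 0" "poly (map_poly to_ac g) \<alpha> = 0"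
  shows "f dvd g"
proof -
  have "f \<noteq> 0" using assms(1) by (simp add: Factorial_Ring.irreducible_def)
  have "\<exists>m. m \<noteq> 0 \<and> poly (map_poly to_ac m) \<alpha> = 0 \<and>
    (\<forall>g. poly (map_poly to_ac g) \<alpha> = 0 \<longrightarrow> m dvd g) \<and> irreducible m"
    by (rule minpoly_exists[OF \<open>f \<noteq> 0\<close> assms(2)]) blast
  then obtain m where m: "m \<noteq> 0" "poly (map_poly to_ac m) \<alpha> = 0"
    "\<And>g. poly (map_poly to_ac g) \<alpha> = 0 \<Longrightarrow> m dvd g" "irreducible m"
    by blast
  obtain r where r: "f = m * r" using m(3)[OF assms(2)] by auto
  have "\<not> is_unit m" using m(4) by (simp add: Factorial_Ring.irreducible_def)
  moreover from Factorial_Ring.irreducibleD[OF assms(1) r] have "is_unit m \<or> is_unit r" .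
  ultimately have "is_unit r" by blast
  then have "f dvd m" unfolding r using mult_unit_dvd_iff[of r m m] by simp
  then show ?thesis using m(3)[OF assms(3)] by (rule dvd_trans)
qed
lemma orbit_roots:
  fixes f :: "'a::{finite,field} poly" and \<alpha> :: "'a alg_closure"
  assumes "irreducible f" "poly (map_poly to_ac f) \<alpha> = 0" "\<alpha> ^ n = 1" "n > 0"
    and Qm: "card (UNIV::'a set) = CHAR('a) ^ m"
    and \<beta>: "poly (map_poly to_ac f) \<beta> = 0"
  shows "\<exists>i. \<beta> = \<alpha> ^ (card (UNIV::'a set) ^ i)"
proof -
  define Q where "Q = card (UNIV::'a set)"
  have Q0: "Q > 0" unfolding Q_def using finite_UNIV_card_ge_0[where 'a='a] by simp
  have P: "prime CHAR('a alg_closure)" "Q = CHAR('a alg_closure) ^ m"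
    using prime_CHAR_ff[where 'a='a] Qm Q_def by simp_all
  define S where "S = range (\<lambda>i. \<alpha> ^ (Q ^ i))"
  define U :: "'a alg_closure poly" where "U = monom 1 n - 1"
  have "coeff U n = 1" using assms(4) by (simp add: U_def)
  then have "U \<noteq> 0" by auto
  have "S \<subseteq> {z. poly U z = 0}"
  proof
    fix z assume "z \<in> S"
    then obtain i where zi: "z = \<alpha> ^ (Q ^ i)" by (auto simp: S_def)
    have "z ^ n = (\<alpha> ^ n) ^ (Q ^ i)" unfolding zi by (simp flip: power_mult add: mult.commute)
    then show "z \<in> {z. poly U z = 0}" by (simp add: U_def poly_monom assms(3))
  qed
  then have finS: "finite S" using poly_roots_finite[OF \<open>U \<noteq> 0\<close>] finite_subset by blast
  define \<phi> :: "'a alg_closure \<Rightarrow> 'a alg_closure" where "\<phi> = (\<lambda>z. z ^ Q)"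
  have "\<phi> ` S \<subseteq> S"
  proof
    fix z assume "z \<in> \<phi> ` S"
    then obtain i where zi: "z = (\<alpha> ^ (Q ^ i)) ^ Q" by (auto simp: S_def \<phi>_def)
    have "z = \<alpha> ^ (Q ^ Suc i)" unfolding zi by (simp flip: power_mult add: mult.commute)
    then show "z \<in> S" unfolding S_def by blast
  qed
  moreover have "inj_on \<phi> S"
    unfolding \<phi>_def by (intro inj_onI) (rule frob_inj[OF P])
  ultimately have phiS: "\<phi> ` S = S" using endo_inj_surj[OF finS] by blast
  have hom: "\<phi> 0 = 0" "\<phi> 1 = 1" "\<And>x y. \<phi> (x + y) = \<phi> x + \<phi> y" "\<And>x y. \<phi> (x * y) = \<phi> x * \<phi> y"
    using Q0 frob_add[OF P] by (auto simp: \<phi>_def power_0_left power_mult_distrib)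
  define h where "h = (\<Prod>s\<in>S. [:-s, 1:])"
  have "map_poly \<phi> h = (\<Prod>s\<in>S. map_poly \<phi> [:-s, 1:])"
    unfolding h_def by (rule map_poly_hom_prod[OF hom])
  also have "\<dots> = (\<Prod>s\<in>S. [:- \<phi> s, 1:])"
    by (intro prod.cong refl) (simp add: \<phi>_def map_poly_pCons power_0_left Q0 frob_neg[OF P])
  also have "\<dots> = (\<Prod>s\<in>\<phi> ` S. [:- s, 1:])"
    by (subst prod.reindex[OF \<open>inj_on \<phi> S\<close>]) (simp add: o_def)
  also have "\<dots> = h" using phiS h_def by simp
  finally have hfix: "map_poly \<phi> h = h" .
  have "coeff h i \<in> range to_ac" for i
  proof -
    have "coeff h i ^ Q = coeff h i"
      using arg_cong[OF hfix, of "\<lambda>p. coeff p i"] by (simp add: coeff_map_poly Q0 power_0_left \<phi>_def)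
    then show ?thesis using fixed_in_range Q_def by blast
  qed
  define h0 where "h0 = map_poly of_ac h"
  have hh0: "map_poly to_ac h0 = h"
    by (intro poly_eqI) (simp add: h0_def coeff_map_poly to_ac_of_ac \<open>\<And>i. coeff h i \<in> range to_ac\<close>)
  have "\<alpha> \<in> S" unfolding S_def by (metis power_0 power_one_right rangeI)
  then have "poly h \<alpha> = 0" using finS by (auto simp: h_def poly_prod)
  then have "f dvd h0" using root_dvd[OF assms(1,2)] hh0 by simp
  then obtain r where "h0 = f * r" by auto
  then have "poly h \<beta> = 0" using \<beta> hh0 by (metis map_poly_to_ac_mult mult_zero_left poly_mult)
  then have "\<beta> \<in> S" using finS by (auto simp: h_def poly_prod)
  then show ?thesis unfolding S_def Q_def by auto
qed



lemma nt_equiv: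
  fixes l q :: nat
  assumes l: "prime l" "l \<noteq> 2" and cop: "coprime l q"
  shows "(\<exists>j. odd j \<and> l dvd q ^ j + 1) \<longleftrightarrow> \<not> (even (ord l (q ^ 2)) \<or> odd (ord l q))"
proof
  assume "\<exists>j. odd j \<and> l dvd q ^ j + 1"
  then obtain j where j: "odd j" "l dvd q ^ j + 1" by blast
  have c1: "[int q ^ j = -1] (mod int l)"
    using j(2) unfolding cong_iff_dvd_diff by (metis diff_minus_eq_add int_dvd_int_iff of_nat_1 of_nat_add of_nat_power)
  have "[(int q ^ j) ^ 2 = (-1) ^ 2] (mod int l)" using c1 by (rule cong_pow)
  then have "[int (q ^ (2 * j)) = int 1] (mod int l)" by (simp add: power_mult mult.commute)
  then have c2: "[q ^ (2 * j) = 1] (mod l)" using cong_int_iff by blast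
  then have "[(q ^ 2) ^ j = 1] (mod l)" by (simp add: power_mult)
  then have "ord l (q ^ 2) dvd j" using ord_divides by blast
  then have o2: "odd (ord l (q ^ 2))" using j(1) dvd_trans by blast
  have "even (ord l q)"
  proof (rule ccontr)
    assume odd: "odd (ord l q)"
    have "ord l q dvd 2 * j" using c2 ord_divides by blast
    moreover have "coprime (ord l q) 2" using odd by simp
    ultimately have "ord l q dvd j" using coprime_dvd_mult_right_iff by blast
    then have "[q ^ j = 1] (mod l)" using ord_divides by blast
    then have "[int q ^ j = 1] (mod int l)" by (metis cong_int_iff of_nat_1 of_nat_power)
    then have "[-1 = 1] (mod int l)" using c1 by (metis cong_sym cong_trans)
    then have "int l dvd 2" unfolding cong_iff_dvd_diff by (simp add: dvd_minus_iff)
    then have "l dvd 2" by (metis int_dvd_int_iff of_nat_numeral)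
    then have "l \<le> 2" by (simp add: dvd_imp_le)
    moreover have "l \<ge> 2" using l(1) prime_ge_2_nat by blast
    ultimately show False using l(2) by simp
  qed
  then show "\<not> (even (ord l (q ^ 2)) \<or> odd (ord l q))" using o2 by simp
next
  assume "\<not> (even (ord l (q ^ 2)) \<or> odd (ord l q))"
  then have e: "even (ord l q)" and o: "odd (ord l (q ^ 2))" by auto
  define a where "a = q ^ ord l (q ^ 2)"
  have "[(q ^ 2) ^ ord l (q ^ 2) = 1] (mod l)" by (rule ord)
  then have "[int a ^ 2 = 1] (mod int l)" unfolding a_def
    by (metis cong_int_iff of_nat_1 of_nat_power power_mult mult.commute)
  then have "int l dvd (int a - 1) * (int a + 1)"
    unfolding cong_iff_dvd_diff by (simp add: algebra_simps power2_eq_square)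
  moreover have "prime (int l)" using l(1) by simp
  ultimately have "int l dvd int a - 1 \<or> int l dvd int a + 1" using prime_dvd_mult_iff by blast
  then show "\<exists>j. odd j \<and> l dvd q ^ j + 1"
  proof
    assume "int l dvd int a - 1"
    then have "[int a = int 1] (mod int l)" unfolding cong_iff_dvd_diff by simp
    then have "[q ^ ord l (q ^ 2) = 1] (mod l)" unfolding a_def using cong_int_iff by blast
    then have "ord l q dvd ord l (q ^ 2)" using ord_divides by blast
    then show ?thesis using e o dvd_trans by blast
  next
    assume "int l dvd int a + 1"
    then have "l dvd a + 1" by (metis int_dvd_int_iff of_nat_1 of_nat_add)
    then show ?thesis using o unfolding a_def by blast
  qed
qed

lemma map_to_ac_reflect:
  "map_poly to_ac (reflect_poly f) = reflect_poly (map_poly (to_ac :: 'a::field \<Rightarrow> _) f)"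
  by (intro poly_eqI) (simp add: coeff_reflect_poly coeff_map_poly degree_map_poly)

lemma map_to_ac_xn1:
  "map_poly to_ac (monom 1 n - 1) = (monom 1 n - 1 :: 'a::field alg_closure poly)"
  by (intro poly_eqI) (simp add: coeff_map_poly coeff_1)

lemma dagger_root:
  fixes f :: "'a::field poly" and \<rho> :: "'a alg_closure"
  assumes P: "prime CHAR('a)" and qk: "q = CHAR('a) ^ k"
    and c0: "coeff f 0 \<noteq> 0" and r: "poly (map_poly to_ac f) \<rho> = 0"
  shows "poly (map_poly to_ac (dagger_poly q f)) ((inverse \<rho>) ^ q) = 0"
proof -
  have q0: "q > 0" using P qk prime_gt_0_nat by auto
  have "\<rho> \<noteq> 0"
  proof
    assume "\<rho> = 0"
    then have "coeff (map_poly to_ac f) 0 = 0" using r by (simp add: poly_0_coeff_0)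
    then show False using c0 by (simp add: coeff_map_poly)
  qed
  have m: "map_poly to_ac (recip_poly f) =
      smult (to_ac (inverse (coeff f 0))) (reflect_poly (map_poly to_ac f))"
    unfolding recip_poly_def by (subst map_poly_smult) (simp_all add: map_to_ac_reflect)
  have "poly (map_poly to_ac (recip_poly f)) (inverse \<rho>) = 0"
    unfolding m using \<open>\<rho> \<noteq> 0\<close> r by (simp add: poly_reflect_poly_nz)
  moreover have "poly (map_poly to_ac (dagger_poly q f)) ((inverse \<rho>) ^ q) =
      (poly (map_poly to_ac (recip_poly f)) (inverse \<rho>)) ^ q"
    unfolding dagger_poly_def conj_poly_def by (rule frob_eval[OF P qk])
  ultimately show ?thesis using q0 by (simp add: power_0_left)
qed

lemma dagger_deg_lead:
  fixes f :: "'a::field poly"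
  assumes c0: "coeff f 0 \<noteq> 0" and q0: "q > 0"
  shows "degree (dagger_poly q f) = degree f" "lead_coeff (dagger_poly q f) = 1"
proof -
  have dR: "degree (recip_poly f) = degree f" using c0 by (simp add: recip_poly_def)
  have dD: "degree (dagger_poly q f) = degree (recip_poly f)"
    unfolding dagger_poly_def conj_poly_def by (rule degree_map_poly) simp
  then show "degree (dagger_poly q f) = degree f" using dR by simp
  have "lead_coeff (recip_poly f) = 1"
    using dR c0 by (simp add: recip_poly_def coeff_reflect_poly)
  then show "lead_coeff (dagger_poly q f) = 1"
    using dD q0 unfolding dagger_poly_def conj_poly_def by (simp add: coeff_map_poly power_0_left)
qed

lemma monic_dvd_eq:
  fixes f g :: "'a::field poly"
  assumes "lead_coeff f = 1" "lead_coeff g = 1" "f dvd g" "degree g \<le> degree f"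
  shows "f = g"
proof -
  obtain r where r: "g = f * r" using assms(3) by auto
  have g0: "g \<noteq> 0" using assms(2) by auto
  then have f0: "f \<noteq> 0" and r0: "r \<noteq> 0" using r by auto
  have "degree g = degree f + degree r" using r f0 r0 by (simp add: degree_mult_eq)
  then have "degree r = 0" using assms(4) by simp
  then obtain c where c: "r = [:c:]" by (metis degree_eq_zeroE)
  have "lead_coeff g = lead_coeff f * c" using r c by (simp add: lead_coeff_mult)
  then have "c = 1" using assms(1,2) by simp
  then show ?thesis using r c by simp
qed



lemma lin_SCRIM:
  fixes q k n :: nat
  assumes P: "prime CHAR('a::field)" and qk: "q = CHAR('a) ^ k" and n: "n > 0"
  shows "SCRIM q ([:-1, 1:] :: 'a poly) \<and> [:-1, 1:] dvd (monom 1 n - (1 :: 'a poly))"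
proof -
  have q0: "q > 0" using P qk prime_gt_0_nat by auto
  have neg: "(-1 :: 'a) ^ q = -1" using frob_neg[OF P qk, of 1] by simp
  have "dagger_poly q [:-1, 1:] = ([:-1, 1:] :: 'a poly)"
    unfolding dagger_poly_def conj_poly_def recip_poly_def
    using q0 by (intro poly_eqI) (auto simp: coeff_map_poly coeff_reflect_poly coeff_pCons neg power_0_left split: nat.split)
  moreover have "irreducible ([:-1, 1:] :: 'a poly)" by (rule irreducible_linear_field_poly) simp
  moreover have "poly (monom 1 n - (1 :: 'a poly)) 1 = 0" by (simp add: poly_monom)
  then have "[:-1, 1:] dvd (monom 1 n - (1 :: 'a poly))" using poly_eq_0_iff_dvd by fastforce
  ultimately show ?thesis unfolding SCRIM_def by simp
qed

lemma dirA:
  fixes f :: "'a::{finite,field} poly" and q k n :: nat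
  assumes P: "prime CHAR('a)" and qk: "q = CHAR('a) ^ k" and card: "card (UNIV::'a set) = q ^ 2"
    and n: "n > 0" "coprime n q"
    and f: "irreducible f" "lead_coeff f = 1" "coeff f 0 \<noteq> 0" "f = dagger_poly q f"
       "f dvd monom 1 n - 1" "f \<noteq> [:-1, 1:]"
  shows "\<exists>l j. prime l \<and> l dvd n \<and> odd j \<and> l dvd q ^ j + 1"
proof -
  have q0: "q > 0" using P qk prime_gt_0_nat by auto
  have f0: "f \<noteq> 0" and nu: "\<not> is_unit f" using f(1) by (simp_all add: Factorial_Ring.irreducible_def)
  have df: "degree f \<noteq> 0" using nu f0 is_unit_iff_degree by blast
  have "degree (map_poly to_ac f) > 0" using df by (simp add: degree_map_poly)
  then obtain \<alpha> where \<alpha>: "poly (map_poly to_ac f) \<alpha> = 0" using alg_closed_imp_poly_has_root by blast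
  obtain r where r: "monom 1 n - 1 = f * r" using f(5) by auto
  have "poly (map_poly to_ac (monom 1 n - 1)) \<alpha> = 0"
    unfolding r map_poly_to_ac_mult using \<alpha> by simp
  then have \<alpha>n: "\<alpha> ^ n = 1" by (simp add: map_to_ac_xn1 poly_monom)
  then have \<alpha>0: "\<alpha> \<noteq> 0" using n(1) by (metis power_0_left zero_neq_one not_gr0)
  have \<alpha>1: "\<alpha> \<noteq> 1"
  proof
    assume "\<alpha> = 1"
    then have "poly (map_poly to_ac [:-1, 1:]) \<alpha> = 0" by (simp add: map_poly_pCons)
    then have "f dvd [:-1, 1:]" using root_dvd[OF f(1) \<alpha>] by blast
    then have "f = [:-1, 1:]" using monic_dvd_eq[OF f(2)] df by simp
    then show False using f(6) by simp
  qed
  have "poly (map_poly to_ac f) ((inverse \<alpha>) ^ q) = 0"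
    using dagger_root[OF P qk f(3) \<alpha>] f(4) by simp
  moreover have Qm: "card (UNIV::'a set) = CHAR('a) ^ (k * 2)" using card qk by (simp add: power_mult)
  ultimately obtain i where i: "(inverse \<alpha>) ^ q = \<alpha> ^ (card (UNIV::'a set) ^ i)"
    using orbit_roots[OF f(1) \<alpha> \<alpha>n n(1) Qm] by blast
  define t where "t = q ^ (2 * i) + q"
  have "\<alpha> ^ t = 1"
  proof -
    have "\<alpha> ^ t = \<alpha> ^ (card (UNIV::'a set) ^ i) * \<alpha> ^ q"
      unfolding t_def card by (simp add: power_add power_mult)
    also have "\<dots> = (inverse \<alpha> * \<alpha>) ^ q" unfolding i[symmetric] by (simp add: power_mult_distrib)
    also have "\<dots> = 1" using \<alpha>0 by simp
    finally show ?thesis .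
  qed
  obtain x y where xy: "n * x = t * y + gcd n t" using bezout_nat[of n t] n(1) by auto
  have "\<alpha> ^ (gcd n t) = 1"
  proof -
    have "\<alpha> ^ (n * x) = \<alpha> ^ (t * y) * \<alpha> ^ (gcd n t)" by (simp add: xy power_add)
    then show ?thesis using \<alpha>n \<open>\<alpha> ^ t = 1\<close> by (simp add: power_mult)
  qed
  then have "gcd n t \<noteq> 1" using \<alpha>1 by auto
  then obtain l where l: "prime l" "l dvd gcd n t" using prime_factor_nat by blast
  then have ln: "l dvd n" and lt: "l dvd t" by auto
  have cop: "coprime l q" using coprime_divisors[OF ln dvd_refl n(2)] .
  show ?thesis
  proof (cases "i = 0")
    case True
    then have "l dvd q ^ 1 + 1" using lt by (simp add: t_def add.commute)
    then show ?thesis using l(1) ln by (intro exI[of _ l] exI[of _ 1]) simp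
  next
    case False
    then have "t = q * (q ^ (2 * i - 1) + 1)"
      unfolding t_def by (simp add: algebra_simps flip: power_Suc)
    then have "l dvd q ^ (2 * i - 1) + 1" using lt cop coprime_dvd_mult_right_iff by metis
    moreover have "odd (2 * i - 1)" using False by simp
    ultimately show ?thesis using l(1) ln by blast
  qed
qed



lemma dirB:
  fixes q k n l j :: nat
  assumes P: "prime CHAR('a::{finite,field})" and qk: "q = CHAR('a) ^ k" and k: "k > 0"
    and card: "card (UNIV::'a set) = q ^ 2"
    and n: "n > 0" "coprime n q"
    and l: "prime l" "l dvd n" and j: "odd j" "l dvd q ^ j + 1"
  shows "\<exists>f :: 'a poly. SCRIM q f \<and> f dvd monom 1 n - 1 \<and> f \<noteq> [:-1, 1:]"
proof -
  have q0: "q > 0" using P qk prime_gt_0_nat by auto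
  have lp: "\<not> CHAR('a) dvd l"
  proof
    assume "CHAR('a) dvd l"
    then have "CHAR('a) = l" using P l(1) primes_dvd_imp_eq by blast
    moreover have "CHAR('a) dvd q" using qk k by simp
    ultimately have "l dvd gcd n q" using l(2) by simp
    then show False using n(2) l(1) by simp
  qed
  have l2: "l \<ge> 2" using l(1) prime_ge_2_nat by blast
  define PL :: "'a alg_closure poly" where "PL = (\<Sum>i<l. monom 1 i)"
  have "coeff PL (l - 1) = 1" unfolding PL_def using l2
    by (simp add: coeff_sum)
  then have "degree PL \<ge> l - 1" by (intro le_degree) simp
  then have "degree PL > 0" using l2 by simp
  then obtain \<alpha> where \<alpha>: "poly PL \<alpha> = 0" using alg_closed_imp_poly_has_root by blast
  have sum\<alpha>: "(\<Sum>i<l. \<alpha> ^ i) = 0" using \<alpha> by (simp add: PL_def poly_sum poly_monom)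
  have \<alpha>l: "\<alpha> ^ l = 1"
    using power_diff_1_eq[of \<alpha> l] sum\<alpha> by simp
  have \<alpha>1: "\<alpha> \<noteq> 1"
  proof
    assume "\<alpha> = 1"
    then have "(of_nat l :: 'a alg_closure) = 0" using sum\<alpha> by simp
    then show False using lp by (simp add: of_nat_eq_0_iff_char_dvd)
  qed
  have \<alpha>0: "\<alpha> \<noteq> 0" using \<alpha>l l2 by (metis power_0_left zero_neq_one not_gr0 le_0_eq zero_less_numeral dual_order.strict_trans2)
  define Y :: "'a poly" where "Y = monom 1 l - 1"
  have "coeff Y l = 1" using l2 by (simp add: Y_def)
  then have Y0: "Y \<noteq> 0" by auto
  have "poly (map_poly to_ac Y) \<alpha> = 0" by (simp add: Y_def map_to_ac_xn1 poly_monom \<alpha>l)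
  then have "\<exists>m. m \<noteq> 0 \<and> poly (map_poly to_ac m) \<alpha> = 0 \<and>
    (\<forall>g. poly (map_poly to_ac g) \<alpha> = 0 \<longrightarrow> m dvd g) \<and> irreducible m \<and> lead_coeff m = 1"
    by (rule minpoly_exists[OF Y0]) blast
  then obtain f where f: "f \<noteq> 0" "poly (map_poly to_ac f) \<alpha> = 0"
    "\<And>g. poly (map_poly to_ac g) \<alpha> = 0 \<Longrightarrow> f dvd g" "irreducible f" "lead_coeff f = 1"
    by blast
  have fY: "f dvd Y" using f(3) \<open>poly (map_poly to_ac Y) \<alpha> = 0\<close> by blast
  obtain s where s: "n = l * s" using l(2) by auto
  have "Y dvd monom 1 n - 1"
  proof -
    have "monom 1 n - (1 :: 'a poly) = (monom 1 l) ^ s - 1" by (simp add: s monom_power)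
    also have "\<dots> = Y * (\<Sum>i<s. (monom 1 l) ^ i)" unfolding Y_def by (rule power_diff_1_eq)
    finally show ?thesis by simp
  qed
  with fY have fd: "f dvd monom 1 n - 1" by (rule dvd_trans)
  have fx: "f \<noteq> [:-1, 1:]"
  proof
    assume "f = [:-1, 1:]"
    then have "\<alpha> - 1 = 0" using f(2) by (simp add: map_poly_pCons)
    then show False using \<alpha>1 by simp
  qed
  have c0: "coeff f 0 \<noteq> 0"
  proof
    assume "coeff f 0 = 0"
    obtain r where r: "monom 1 n - 1 = f * r" using fd by auto
    have "poly (monom 1 n - (1 :: 'a poly)) 0 = poly f 0 * poly r 0" unfolding r by simp
    then show False using \<open>coeff f 0 = 0\<close> n(1) by (simp add: poly_monom poly_0_coeff_0)
  qed
  define i where "i = j div 2"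
  have ji: "j = 2 * i + 1" using j(1) unfolding i_def by simp
  define N where "N = card (UNIV::'a set) ^ i"
  have N: "N = CHAR('a) ^ (k * 2 * i)" unfolding N_def card qk by (simp add: power_mult)
  have mf: "map_poly (\<lambda>c. c ^ N) f = f"
    by (intro poly_eqI) (simp add: coeff_map_poly N_def finite_field_pow_card_pow power_0_left)
  have "poly (map_poly to_ac f) (\<alpha> ^ N) = (poly (map_poly to_ac f) \<alpha>) ^ N"
    using frob_eval[OF P N, of f \<alpha>] mf by simp
  also have "\<dots> = 0" using f(2) N P prime_gt_0_nat by (simp add: power_0_left)
  finally have "poly (map_poly to_ac (dagger_poly q f)) ((inverse (\<alpha> ^ N)) ^ q) = 0"
    by (rule dagger_root[OF P qk c0])
  moreover have "(inverse (\<alpha> ^ N)) ^ q = \<alpha>"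
  proof -
    have Nq: "N * q = q ^ j" unfolding N_def card ji by (simp add: power_mult power_add)
    obtain u where u: "q ^ j + 1 = l * u" using j(2) by auto
    have "\<alpha> ^ (q ^ j) * \<alpha> = 1" using u \<alpha>l by (metis power_Suc2 power_mult power_one add.commute plus_1_eq_Suc)
    then have "\<alpha> ^ (q ^ j) = inverse \<alpha>" using \<alpha>0 by (simp add: field_simps)
    then have "(\<alpha> ^ N) ^ q = inverse \<alpha>" using Nq by (simp flip: power_mult)
    then show ?thesis by (simp add: power_inverse)
  qed
  ultimately have "poly (map_poly to_ac (dagger_poly q f)) \<alpha> = 0" by simp
  then have "f dvd dagger_poly q f" using root_dvd[OF f(4) f(2)] by blast
  then have "f = dagger_poly q f"
    using monic_dvd_eq[OF f(5) dagger_deg_lead(2)[OF c0 q0]] dagger_deg_lead(1)[OF c0 q0] by simp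
  then have "SCRIM q f" unfolding SCRIM_def using f(4,5) c0 by simp
  then show ?thesis using fd fx by blast
qed



theorem corollary2p4:
  fixes q n :: nat
  assumes "\<exists>p k. prime p \<and> k > 0 \<and> q = p ^ k"
    and "card (UNIV :: 'a set) = q ^ 2"
    and "odd n" and "n > 0" and "coprime n q"
  shows "{f :: ('a::{finite,field}) poly. SCRIM q f \<and> f dvd (Polynomial.monom 1 n - 1)} = {[:-1, 1:]}
     \<longleftrightarrow> (\<forall>l. prime l \<and> l dvd n \<longrightarrow> even (ord l (q ^ 2)) \<or> odd (ord l q))"
proof -
  obtain p0 k where p0: "prime p0" "k > 0" "q = p0 ^ k" using assms(1) by blast
  have P: "prime CHAR('a)" by (rule prime_CHAR_ff)
  have "CHAR('a) dvd card (UNIV :: 'a set)" by (rule CHAR_dvd_CARD)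
  then have "CHAR('a) dvd p0 ^ (k * 2)" using assms(2) p0(3) by (simp add: power_mult)
  then have "CHAR('a) dvd p0" using P prime_dvd_power by blast
  then have "CHAR('a) = p0" using P p0(1) primes_dvd_imp_eq by blast
  then have qk: "q = CHAR('a) ^ k" using p0(3) by simp
  have aux: "prime l \<Longrightarrow> l dvd n \<Longrightarrow> l \<noteq> 2 \<and> coprime l q" for l
  proof -
    assume "prime l" "l dvd n"
    then have "l \<noteq> 2" using assms(3) by auto
    moreover have "coprime l q" using coprime_divisors[OF \<open>l dvd n\<close> dvd_refl assms(5)] .
    ultimately show ?thesis by simp
  qed
  let ?M = "{f :: 'a poly. SCRIM q f \<and> f dvd (Polynomial.monom 1 n - 1)}"
  have lin: "[:-1, 1:] \<in> ?M" using lin_SCRIM[OF P qk assms(4)] by simp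
  show ?thesis
  proof
    assume M: "?M = {[:-1, 1:]}"
    show "\<forall>l. prime l \<and> l dvd n \<longrightarrow> even (ord l (q ^ 2)) \<or> odd (ord l q)"
    proof (intro allI impI)
      fix l assume l: "prime l \<and> l dvd n"
      show "even (ord l (q ^ 2)) \<or> odd (ord l q)"
      proof (rule ccontr)
        assume "\<not> (even (ord l (q ^ 2)) \<or> odd (ord l q))"
        then obtain j where j: "odd j" "l dvd q ^ j + 1"
          using nt_equiv[of l q] aux[of l] l by blast
        obtain f :: "'a poly" where "SCRIM q f" "f dvd monom 1 n - 1" "f \<noteq> [:-1, 1:]"
          using dirB[OF P qk p0(2) assms(2) assms(4) assms(5) _ _ j] l by blast
        then show False using M by blast
      qed
    qed
  next
    assume R: "\<forall>l. prime l \<and> l dvd n \<longrightarrow> even (ord l (q ^ 2)) \<or> odd (ord l q)"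
    have "f = [:-1, 1:]" if "f \<in> ?M" for f
    proof (rule ccontr)
      assume ne: "f \<noteq> [:-1, 1:]"
      from that have S: "SCRIM q f" "f dvd monom 1 n - 1" by auto
      then have "irreducible f" "lead_coeff f = 1" "coeff f 0 \<noteq> 0" "f = dagger_poly q f"
        unfolding SCRIM_def by auto
      then obtain l j where "prime l" "l dvd n" "odd j" "l dvd q ^ j + 1"
        using dirA[OF P qk assms(2) assms(4) assms(5)] S(2) ne by blast
      then show False using nt_equiv[of l q] aux[of l] R by blast
    qed
    then show "?M = {[:-1, 1:]}" using lin by blast
  qed
qed


end
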